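(* For every integer $n\ge 3$, the crown graph of order $2n$ admits an optimal extended irregular dominating set.
   Context: For $n\ge3$, the crown graph of order $2n$ is $K_{n,n}$ with parts $\{a_1,\dots,a_n\}$, $\{b_1,\dots,b_n\}$ minus the perfect matching $\{\{a_i,b_i\}: 1\le i\le n\}$. In a finite simple graph $\Gamma=(V,E)$ with distance $d$, a vertex $v$ carrying a non-negative integer label $\ell$ dominates (covers) exactly the vertices $u$ with $d(u,v)=\ell$; a vertex labeled $0$ dominates only itself. For $k\ge 0$, a $k$-extended irregular dominating set is a set $S\subseteq V$ of $k$ vertices with a labeling $\lambda:S\to\mathbb{Z}_{\ge0}$ with distinct labels, such that every vertex of $V$ is dominated by some vertex of $S$; it is assumed that some vertex of $S$ has label $0$. $\gamma_e(\Gamma)$ is the minimum cardinality of such a set, and a $k$-extended irregular dominating set is optimal if $k=\gamma_e(\Gamma)$. *)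

theory Defs
  imports Main
begin

(* A graph is given by a vertex set V and a symmetric irreflexive adjacency relation E. *)

fun walk_len :: "'a set \<Rightarrow> ('a \<Rightarrow> 'a \<Rightarrow> bool) \<Rightarrow> nat \<Rightarrow> 'a \<Rightarrow> 'a \<Rightarrow> bool" where
  "walk_len V E 0 u v \<longleftrightarrow> u = v \<and> u \<in> V"
| "walk_len V E (Suc k) u v \<longleftrightarrow> u \<in> V \<and> (\<exists>w\<in>V. E u w \<and> walk_len V E k w v)"

(* graph distance d(u,v) equals k (never holds if u,v are in different components) *)
definition dist_eq :: "'a set \<Rightarrow> ('a \<Rightarrow> 'a \<Rightarrow> bool) \<Rightarrow> 'a \<Rightarrow> 'a \<Rightarrow> nat \<Rightarrow> bool" where
  "dist_eq V E u v k \<longleftrightarrow> walk_len V E k u v \<and> (\<forall>j<k. \<not> walk_len V E j u v)"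

definition dominates :: "'a set \<Rightarrow> ('a \<Rightarrow> 'a \<Rightarrow> bool) \<Rightarrow> ('a \<Rightarrow> nat) \<Rightarrow> 'a \<Rightarrow> 'a \<Rightarrow> bool" where
  "dominates V E lam v u \<longleftrightarrow> dist_eq V E u v (lam v)"

definition ext_irr_dom :: "'a set \<Rightarrow> ('a \<Rightarrow> 'a \<Rightarrow> bool) \<Rightarrow> 'a set \<Rightarrow> ('a \<Rightarrow> nat) \<Rightarrow> bool" where
  "ext_irr_dom V E S lam \<longleftrightarrow> S \<subseteq> V \<and> inj_on lam S \<and> (\<exists>v\<in>S. lam v = 0)
     \<and> (\<forall>u\<in>V. \<exists>v\<in>S. dominates V E lam v u)"

definition gamma_e :: "'a set \<Rightarrow> ('a \<Rightarrow> 'a \<Rightarrow> bool) \<Rightarrow> nat" where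
  "gamma_e V E = (LEAST k. \<exists>S lam. ext_irr_dom V E S lam \<and> card S = k)"

definition optimal_ext_irr_dom :: "'a set \<Rightarrow> ('a \<Rightarrow> 'a \<Rightarrow> bool) \<Rightarrow> 'a set \<Rightarrow> ('a \<Rightarrow> nat) \<Rightarrow> bool" where
  "optimal_ext_irr_dom V E S lam \<longleftrightarrow> ext_irr_dom V E S lam \<and> card S = gamma_e V E"

(* Crown graph of order 2n: a_i = (i, False), b_i = (i, True), i \<in> {1..n};
   a_i ~ b_j iff i \<noteq> j *)
definition crown_V :: "nat \<Rightarrow> (nat \<times> bool) set" where
  "crown_V n = {1..n} \<times> UNIV"

definition crown_E :: "nat \<Rightarrow> nat \<times> bool \<Rightarrow> nat \<times> bool \<Rightarrow> bool" where
  "crown_E n x y \<longleftrightarrow> x \<in> crown_V n \<and> y \<in> crown_V n \<and> snd x \<noteq> snd y \<and> fst x \<noteq> fst y"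

end

theory Submission
  imports Defs
begin

lemma walk1: "walk_len V E (Suc 0) u v \<longleftrightarrow> u \<in> V \<and> v \<in> V \<and> E u v"
  by auto

lemma walk2: "walk_len V E 2 u v \<longleftrightarrow> u \<in> V \<and> v \<in> V \<and> (\<exists>w\<in>V. E u w \<and> E w v)"
  by (auto simp: numeral_eq_Suc)

lemma walk3: "walk_len V E 3 u v \<longleftrightarrow> u \<in> V \<and> v \<in> V \<and> (\<exists>w\<in>V. \<exists>x\<in>V. E u w \<and> E w x \<and> E x v)"
  by (auto simp: numeral_eq_Suc)

lemma lt3: "(j::nat) < 3 \<longleftrightarrow> j = 0 \<or> j = 1 \<or> j = 2" by auto
lemma lt2: "(j::nat) < 2 \<longleftrightarrow> j = 0 \<or> j = 1" by auto

lemma exists_ne2: "n \<ge> 3 \<Longrightarrow> \<exists>k\<in>{1..n}. k \<noteq> i \<and> k \<noteq> (j::nat)"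
proof -
  assume "n \<ge> 3"
  have "card ({1..n} - {i, j}) \<ge> 1"
  proof -
    have "card {1..n} = n" by simp
    moreover have "card ({1..n} - {i,j}) \<ge> card {1..n} - card {i,j}" by (rule diff_card_le_card_Diff) auto
    moreover have "card {i,j} \<le> 2" by (simp add: card_insert_le_m1)
    ultimately show ?thesis using \<open>n \<ge> 3\<close> by linarith
  qed
  then have "{1..n} - {i, j} \<noteq> {}" by (metis card.empty not_one_le_zero)
  then show ?thesis by blast
qed

lemma main_set:
  assumes n: "n \<ge> 3"
  shows "ext_irr_dom (crown_V n) (crown_E n) {(1,False),(1,True),(2,False),(2,True)}
     (\<lambda>x. if x = (1,False) then 2 else if x = (1,True) then 3 else if x = (2,False) then 1 else 0)"
    (is "ext_irr_dom ?V ?E ?S ?l")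
proof -
  have V: "(i, b) \<in> ?V \<longleftrightarrow> 1 \<le> i \<and> i \<le> n" for i b by (simp add: crown_V_def)
  have E: "?E (i,b) (j,c) \<longleftrightarrow> 1 \<le> i \<and> i \<le> n \<and> 1 \<le> j \<and> j \<le> n \<and> b \<noteq> c \<and> i \<noteq> j" for i j b c
    by (auto simp: crown_E_def crown_V_def)
  have sub: "?S \<subseteq> ?V" using n by (auto simp: V)
  have inj: "inj_on ?l ?S" by (auto simp: inj_on_def)
  have cov: "\<exists>v\<in>?S. dominates ?V ?E ?l v u" if u: "u \<in> ?V" for u
  proof -
    obtain i b where ub: "u = (i,b)" by fastforce
    have i: "1 \<le> i" "i \<le> n" using u ub V by auto
    show ?thesis
    proof (cases b)
      case True
      show ?thesis
      proof (cases "i = 2")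
        case True
        then show ?thesis using \<open>b\<close> ub i
          by (intro bexI[of _ "(2,True)"]) (auto simp: dominates_def dist_eq_def V)
      next
        case False
        then show ?thesis using \<open>b\<close> ub i n
          by (intro bexI[of _ "(2,False)"]) (auto simp: dominates_def dist_eq_def V E)
      qed
    next
      case False
      show ?thesis
      proof (cases "i = 1")
        case True
        obtain k where k: "k \<in> {1..n}" "k \<noteq> 1" "k \<noteq> 2" using exists_ne2[OF n] by blast
        have w3: "walk_len ?V ?E 3 (1,False) (1,True)" unfolding walk3
          using n k by (intro conjI bexI[of _ "(2,True)"] bexI[of _ "(k,False)"]) (auto simp: V E)
        have nw2: "\<not> walk_len ?V ?E 2 (1,False) (1,True)" unfolding walk2
          by (auto simp: E)
        have nw1: "\<not> walk_len ?V ?E 1 (1,False) (1,True)" using walk1[of ?V ?E] by (simp add: E)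
        show ?thesis using \<open>\<not> b\<close> ub True w3 nw2 nw1
          by (intro bexI[of _ "(1,True)"]) (auto simp: dominates_def dist_eq_def lt3)
      next
        case False
        obtain k where k: "k \<in> {1..n}" "k \<noteq> 1" "k \<noteq> i" using exists_ne2[OF n] by blast
        have w2: "walk_len ?V ?E 2 (i,False) (1,False)" unfolding walk2
          using n k i by (intro conjI bexI[of _ "(k,True)"]) (auto simp: V E)
        have nw1: "\<not> walk_len ?V ?E 1 (i,False) (1,False)" using walk1[of ?V ?E] by (simp add: E)
        show ?thesis using \<open>\<not> b\<close> ub False w2 nw1
          by (intro bexI[of _ "(1,False)"]) (auto simp: dominates_def dist_eq_def lt2)
      qed
    qed
  qed
  show ?thesis unfolding ext_irr_dom_def using sub inj cov by auto
qed

theorem proposition3p2: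
  fixes n :: nat
  assumes "n \<ge> 3"
  shows "\<exists>S lam. optimal_ext_irr_dom (crown_V n) (crown_E n) S lam"
proof -
  let ?P = "\<lambda>k. \<exists>S lam. ext_irr_dom (crown_V n) (crown_E n) S lam \<and> card S = k"
  have "?P (card {(1::nat,False),(1,True),(2,False),(2,True)})"
    using main_set[OF assms] by blast
  then have "?P (LEAST k. ?P k)" by (rule LeastI)
  then show ?thesis unfolding optimal_ext_irr_dom_def gamma_e_def by blast
qed

end
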